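(* Let $I\subseteq\mathbb{R}$ be an interval, $a,b\in I$ with $a<b$, assume $h(\frac12)>0$, and let $f:I\to\mathbb{R}$ be $h$-convex on $I$ and integrable on $[a,b]$. Then $$\frac{1}{b-a}\int_a^b f(x)\,dx-\frac{1}{2h(\frac12)}f\Big(\frac{a+b}{2}\Big)\ \ge\ \left|\frac{1}{b-a}\int_a^b\Big|\frac{f(x)+f(a+b-x)}{2}\Big|\,dx-\frac{1}{2h(\frac12)}\Big|f\Big(\frac{a+b}{2}\Big)\Big|\right|\ \ge 0.$$
   Context: Let $J$ be an interval with $(0,1)\subseteq J$ and $h:J\to\mathbb{R}$ a non-negative function, not identically zero. A non-negative function $g$ defined on an interval $K$ is called $h$-convex on $K$ if for all $x,y\in K$ and all $t\in(0,1)$: $g(tx+(1-t)y)\le h(t)g(x)+h(1-t)g(y)$. *)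

theory Defs
  imports "HOL-Analysis.Analysis"
begin

definition h_convex :: "(real \<Rightarrow> real) \<Rightarrow> real set \<Rightarrow> (real \<Rightarrow> real) \<Rightarrow> bool" where
  "h_convex h K g \<longleftrightarrow>
     (\<forall>x\<in>K. g x \<ge> 0) \<and>
     (\<forall>x\<in>K. \<forall>y\<in>K. \<forall>t\<in>{0<..<1}.
        g (t * x + (1 - t) * y) \<le> h t * g x + h (1 - t) * g y)"

end

theory Submission
  imports Defs
begin

lemma refl_int:
  fixes f :: "real \<Rightarrow> real"
  assumes "(f has_integral i) {a..b}"
  shows "((\<lambda>x. f (a + b - x)) has_integral i) {a..b}"
proof -
  have "((\<lambda>x. f (1 *\<^sub>R x + (a+b))) has_integral (i /\<^sub>R 1 ^ DIM(real))) (cbox ((a - (a+b)) /\<^sub>R 1) ((b - (a+b)) /\<^sub>R 1))"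
    using has_integral_affinity'[of f i a b 1 "a+b"] assms by (simp only: interval_cbox)
  hence "((\<lambda>y. f (y + (a+b))) has_integral i) {-b..-a}" by (simp add: add.commute)
  hence "((\<lambda>x. (\<lambda>y. f (y + (a+b))) (-x)) has_integral i) {- (-a)..- (-b)}"
    by (rule has_integral_reflect_real[of "\<lambda>y. f (y + (a+b))" i "-a" "-b", THEN iffD2])
  thus ?thesis by simp
qed

theorem theorem15:
  fixes h f :: "real \<Rightarrow> real" and J I :: "real set" and a b :: real
  assumes J_int: "is_interval J" and J_sub: "{0<..<1} \<subseteq> J"
    and h_nonneg: "\<forall>t\<in>J. h t \<ge> 0" and h_nonzero: "\<exists>t\<in>J. h t \<noteq> 0"
    and I_int: "is_interval I" and a_in: "a \<in> I" and b_in: "b \<in> I" and ab: "a < b"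
    and h_half: "h (1/2) > 0"
    and f_hconv: "h_convex h I f"
    and f_int: "f integrable_on {a..b}"
  shows "(1 / (b - a)) * integral {a..b} f - (1 / (2 * h (1/2))) * f ((a + b) / 2)
           \<ge> \<bar>(1 / (b - a)) * integral {a..b} (\<lambda>x. \<bar>(f x + f (a + b - x)) / 2\<bar>)
              - (1 / (2 * h (1/2))) * \<bar>f ((a + b) / 2)\<bar>\<bar>
         \<and> \<bar>(1 / (b - a)) * integral {a..b} (\<lambda>x. \<bar>(f x + f (a + b - x)) / 2\<bar>)
              - (1 / (2 * h (1/2))) * \<bar>f ((a + b) / 2)\<bar>\<bar> \<ge> 0"
proof -
  have sub: "{a..b} \<subseteq> I"
  proof
    fix x assume "x \<in> {a..b}"
    hence "a \<le> x" "x \<le> b" by auto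
    thus "x \<in> I" using is_interval_1[THEN iffD1, OF I_int] a_in b_in by blast
  qed
  have fnn: "\<And>x. x \<in> I \<Longrightarrow> f x \<ge> 0" using f_hconv unfolding h_convex_def by auto
  have conv: "\<And>x y t. x \<in> I \<Longrightarrow> y \<in> I \<Longrightarrow> 0 < t \<Longrightarrow> t < 1 \<Longrightarrow>
      f (t * x + (1 - t) * y) \<le> h t * f x + h (1 - t) * f y"
    using f_hconv unfolding h_convex_def by auto
  define F where "F = integral {a..b} f"
  define m where "m = f ((a + b) / 2)"
  define H where "H = h (1/2)"
  have fI: "(f has_integral F) {a..b}" using f_int F_def by (simp add: has_integral_integral)
  have rI: "((\<lambda>x. f (a + b - x)) has_integral F) {a..b}" using refl_int[OF fI] .
  have gI: "((\<lambda>x. (f x + f (a + b - x)) / 2) has_integral (F + F) / 2) {a..b}"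
    using has_integral_divide[OF has_integral_add[OF fI rI], of 2] by simp
  have absg: "\<And>x. x \<in> {a..b} \<Longrightarrow> \<bar>(f x + f (a + b - x)) / 2\<bar> = (f x + f (a + b - x)) / 2"
  proof -
    fix x assume "x \<in> {a..b}"
    hence "x \<in> I" "a + b - x \<in> I" using sub by auto
    thus "\<bar>(f x + f (a + b - x)) / 2\<bar> = (f x + f (a + b - x)) / 2" using fnn by auto
  qed
  have G: "integral {a..b} (\<lambda>x. \<bar>(f x + f (a + b - x)) / 2\<bar>) = F"
  proof -
    have "integral {a..b} (\<lambda>x. \<bar>(f x + f (a + b - x)) / 2\<bar>) = integral {a..b} (\<lambda>x. (f x + f (a + b - x)) / 2)"
      using absg by (intro integral_cong) auto
    also have "\<dots> = (F + F) / 2" using gI by (rule integral_unique)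
    also have "\<dots> = F" by simp
    finally show ?thesis .
  qed
  have mnn: "m \<ge> 0" unfolding m_def using sub ab by (intro fnn) auto
  have pt: "\<And>x. x \<in> {a..b} \<Longrightarrow> m \<le> H * (f x + f (a + b - x))"
  proof -
    fix x assume x: "x \<in> {a..b}"
    hence "x \<in> I" "a + b - x \<in> I" using sub by auto
    have c: "f ((1/2) * x + (1 - 1/2) * (a + b - x)) \<le> h (1/2) * f x + h (1 - 1/2) * f (a + b - x)"
      by (rule conv) (use \<open>x \<in> I\<close> \<open>a + b - x \<in> I\<close> in auto)
    have eq: "(1/2) * x + (1 - 1/2) * (a + b - x) = (a + b) / 2" by (simp add: field_simps)
    have h2: "(1 - 1/2::real) = 1/2" by simp
    have "f ((a + b) / 2) \<le> h (1/2) * f x + h (1/2) * f (a + b - x)" using c unfolding h2 eq[unfolded h2] .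
    thus "m \<le> H * (f x + f (a + b - x))" unfolding m_def H_def by (simp add: algebra_simps)
  qed
  have cI: "((\<lambda>x. m) has_integral m * (b - a)) {a..b}"
    using has_integral_const_real[of m a b] ab by (simp add: mult.commute)
  have hI: "((\<lambda>x. H * (f x + f (a + b - x))) has_integral H * (F + F)) {a..b}"
    using has_integral_mult_right[OF has_integral_add[OF fI rI], of H] by simp
  have ineq: "m * (b - a) \<le> H * (F + F)"
    using has_integral_le[OF cI hI] pt by blast
  have Hp: "H > 0" using h_half H_def by simp
  have key: "(1 / (b - a)) * F - (1 / (2 * H)) * m \<ge> 0"
  proof -
    have "m / (2 * H) \<le> F / (b - a)"
    proof -
      have "m * (b - a) \<le> (2 * H) * F" using ineq by (simp add: algebra_simps)
      thus ?thesis using Hp ab by (simp add: frac_le_eq divide_le_eq le_divide_eq mult.commute)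
    qed
    thus ?thesis by simp
  qed
  show ?thesis
    unfolding G using key mnn unfolding F_def[symmetric] m_def[symmetric] H_def[symmetric] by simp
qed

end
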